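(* Assume $r+s=2$, and let $T=-T_{\mathfrak p}Q|_{\mathfrak p}+T_1Q|_{\mathfrak k_1}+T_2Q|_{\mathfrak k_2}$ with $T_{\mathfrak p},T_1,T_2>0$. Let $P(x)=ax^3+bx^2+cx+d$ where $$a=nd_2(1-\kappa_2)T_{\mathfrak p},\qquad b=d_1^2(1-\kappa_1)T_1-d_2^2(1-\kappa_2)T_2+2n^2T_{\mathfrak p}-\frac{n^2\kappa_1T_{\mathfrak p}^2}{T_1},$$ $$c=-2nd_2T_2+\frac{2nd_2\kappa_1T_{\mathfrak p}T_2}{T_1}-nd_2\kappa_2T_{\mathfrak p},\qquad d=-\frac{d_2^2\kappa_1T_2^2}{T_1}+\kappa_2d_2^2T_2.$$ Let $g=\beta Q|_{\mathfrak p}+\alpha_1Q|_{\mathfrak k_1}+\alpha_2Q|_{\mathfrak k_2}\in\mathcal M_T^0$ with $\beta,\alpha_1,\alpha_2>0$. Then $g$ is a critical point of $S|_{\mathcal M_T^0}$ if and only if $x=\frac{\alpha_2}{\beta}$ is a multiple root of $P$.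
   Context: Let $G$ be a connected non-compact simple Lie group with Lie algebra $\mathfrak g$, $K$ a maximal compact subgroup with Lie algebra $\mathfrak k$, $B$ the Killing form of $\mathfrak g$, and $\mathfrak p$ the $B$-orthogonal complement of $\mathfrak k$ in $\mathfrak g$. Let $Q=B|_{\mathfrak p}-B|_{\mathfrak k}$. Write $\mathfrak k=\mathfrak k_1\oplus\cdots\oplus\mathfrak k_{r+s}$, where $\mathfrak k_1,\dots,\mathfrak k_r$ are the simple ideals of $[\mathfrak k,\mathfrak k]$, $\mathfrak k_{r+1}$ is the centre of $\mathfrak k$, and $s=1$ if the centre is nontrivial, $s=0$ otherwise. Let $n=\dim\mathfrak p$, $d_i=\dim\mathfrak k_i$, and define $\kappa_i$ by $B_i=\kappa_iB|_{\mathfrak k_i}$, $B_i$ the Killing form of $\mathfrak k_i$. Left-invariant tensor fields on $G$ are identified with bilinear forms on $\mathfrak g$; $Q|_{\mathfrak u}$ denotes $Q$ restricted to $\mathfrak u$ and extended by zero on its $Q$-orthogonal complement. $\mathcal M_K$ is the set of left-invariant metrics on $G$ naturally reductive with respect to $G\times K$ (acting by $(x,k)y=xyk^{-1}$), which by a theorem of Gordon are exactly the metrics $\beta Q|_{\mathfrak p}+\sum_i\alpha_iQ|_{\mathfrak k_i}$ with $\beta,\alpha_i>0$; it is a manifold via these parameters. $S$ is the scalar curvature functional, and $\mathcal M_T^0=\{g\in\mathcal M_K:\mathrm{tr}_gT=0\}$ with the induced manifold structure. *)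

theory Defs
  imports "HOL-Analysis.Analysis" "HOL-Computational_Algebra.Polynomial"
begin

text \<open>Case r + s = 2.  A metric beta Q|p + alpha1 Q|k1 + alpha2 Q|k2 in M_K is encoded
  by its parameter triple (beta, alpha1, alpha2); M_K is the open positive octant.\<close>

definition MK :: "(real \<times> real \<times> real) set" where
  "MK = {(b, a1, a2). 0 < b \<and> 0 < a1 \<and> 0 < a2}"

text \<open>Scalar curvature S of the left-invariant metric with parameters (beta, alpha1, alpha2),
  in terms of n = dim p, d_i = dim k_i and kappa_i (B_i = kappa_i B|k_i):
  S = sum_i kappa_i d_i/(4 alpha_i) - sum_i d_i (1 - kappa_i) alpha_i/(4 beta^2) - n/(2 beta).\<close>

definition scal :: "nat \<Rightarrow> nat \<Rightarrow> nat \<Rightarrow> real \<Rightarrow> real \<Rightarrow> real \<times> real \<times> real \<Rightarrow> real" where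
  "scal n d1 d2 k1 k2 p = (case p of (b, a1, a2) \<Rightarrow>
      k1 * real d1 / (4 * a1) + k2 * real d2 / (4 * a2)
      - (real d1 * (1 - k1) * a1 + real d2 * (1 - k2) * a2) / (4 * b\<^sup>2)
      - real n / (2 * b))"

text \<open>tr_g T for T = -Tp Q|p + T1 Q|k1 + T2 Q|k2.\<close>

definition trT :: "nat \<Rightarrow> nat \<Rightarrow> nat \<Rightarrow> real \<Rightarrow> real \<Rightarrow> real \<Rightarrow> real \<times> real \<times> real \<Rightarrow> real" where
  "trT n d1 d2 Tp T1 T2 p = (case p of (b, a1, a2) \<Rightarrow>
      - Tp * real n / b + T1 * real d1 / a1 + T2 * real d2 / a2)"

definition MT0 :: "nat \<Rightarrow> nat \<Rightarrow> nat \<Rightarrow> real \<Rightarrow> real \<Rightarrow> real \<Rightarrow> (real \<times> real \<times> real) set" where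
  "MT0 n d1 d2 Tp T1 T2 = {p \<in> MK. trT n d1 d2 Tp T1 T2 p = 0}"

definition MT0_tangent :: "nat \<Rightarrow> nat \<Rightarrow> nat \<Rightarrow> real \<Rightarrow> real \<Rightarrow> real \<Rightarrow> real \<times> real \<times> real
    \<Rightarrow> (real \<times> real \<times> real) set" where
  "MT0_tangent n d1 d2 Tp T1 T2 p =
     {v. frechet_derivative (trT n d1 d2 Tp T1 T2) (at p) v = 0}"

definition crit_S_MT0 :: "nat \<Rightarrow> nat \<Rightarrow> nat \<Rightarrow> real \<Rightarrow> real \<Rightarrow> real \<Rightarrow> real \<Rightarrow> real
    \<Rightarrow> real \<times> real \<times> real \<Rightarrow> bool" where
  "crit_S_MT0 n d1 d2 k1 k2 Tp T1 T2 p \<longleftrightarrow>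
     p \<in> MT0 n d1 d2 Tp T1 T2 \<and>
     (\<forall>v \<in> MT0_tangent n d1 d2 Tp T1 T2 p.
        frechet_derivative (scal n d1 d2 k1 k2) (at p) v = 0)"

end

theory Submission
  imports Defs
begin

lemma scal_deriv:
  assumes "b \<noteq> 0" "a1 \<noteq> 0" "a2 \<noteq> 0"
  shows "(scal n d1 d2 k1 k2 has_derivative (\<lambda>v. 
     ((real d1 * (1 - k1) * a1 + real d2 * (1 - k2) * a2) / (2 * b^3) + real n / (2 * b^2)) * fst v
   + (- k1 * real d1 / (4 * a1^2) - real d1 * (1 - k1) / (4 * b^2)) * fst (snd v)
   + (- k2 * real d2 / (4 * a2^2) - real d2 * (1 - k2) / (4 * b^2)) * snd (snd v))) (at (b, a1, a2))"
proof -
  have e: "scal n d1 d2 k1 k2 = (\<lambda>p. k1 * real d1 / (4 * fst (snd p)) + k2 * real d2 / (4 * snd (snd p))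
      - (real d1 * (1 - k1) * fst (snd p) + real d2 * (1 - k2) * snd (snd p)) / (4 * (fst p)\<^sup>2)
      - real n / (2 * fst p))"
    by (auto simp: scal_def fun_eq_iff split: prod.splits)
  show ?thesis unfolding e
    apply (rule has_derivative_eq_rhs)
     apply (rule derivative_eq_intros | simp add: assms)+
    apply (rule ext) apply (simp add: field_simps power2_eq_square power3_eq_cube)
    done
qed

lemma trT_deriv:
  assumes "b \<noteq> 0" "a1 \<noteq> 0" "a2 \<noteq> 0"
  shows "(trT n d1 d2 Tp T1 T2 has_derivative (\<lambda>v. 
     (Tp * real n / b^2) * fst v + (- T1 * real d1 / a1^2) * fst (snd v)
   + (- T2 * real d2 / a2^2) * snd (snd v))) (at (b, a1, a2))"
proof -
  have e: "trT n d1 d2 Tp T1 T2 = (\<lambda>p. - Tp * real n / fst p + T1 * real d1 / fst (snd p) + T2 * real d2 / snd (snd p))"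
    by (auto simp: trT_def fun_eq_iff split: prod.splits)
  show ?thesis unfolding e
    apply (rule has_derivative_eq_rhs)
     apply (rule derivative_eq_intros | simp add: assms)+
    apply (rule ext) apply (simp add: field_simps power2_eq_square power3_eq_cube)
    done
qed
lemma I1:
  fixes N D1 D2 k1 k2 Tp T1 T2 b a1 a2 :: real
  assumes nz: "N \<noteq> 0" "T1 \<noteq> 0" "b \<noteq> 0" "a1 \<noteq> 0" "a2 \<noteq> 0" "D1 \<noteq> 0"
  and F: "- Tp * N / b + T1 * D1 / a1 + T2 * D2 / a2 = 0"
  shows "let x = a2 / b in
   (- (D2 ^ 2 * k1 * T2 ^ 2 / T1) + k2 * D2 ^ 2 * T2)
   + (- (2 * N * D2 * T2) + 2 * N * D2 * k1 * Tp * T2 / T1 - N * D2 * k2 * Tp) * x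
   + (D1 ^ 2 * (1 - k1) * T1 - D2 ^ 2 * (1 - k2) * T2 + 2 * N ^ 2 * Tp - N ^ 2 * k1 * Tp ^ 2 / T1) * x^2
   + (N * D2 * (1 - k2) * Tp) * x^3
   = -4 * T1 * D1 * a2^2 / a1 * (k1 * D1 / (4 * a1) + k2 * D2 / (4 * a2)
      - (D1 * (1 - k1) * a1 + D2 * (1 - k2) * a2) / (4 * b\<^sup>2)
      - N / (2 * b))"
proof -
  have hTp: "Tp = (T1 * D1 / a1 + T2 * D2 / a2) * b / N" using F nz by (simp add: field_simps)
  show ?thesis unfolding Let_def hTp using nz
    apply (simp add: field_simps power2_eq_square power3_eq_cube)
    done
qed


lemma I2:
  fixes N D1 D2 k1 k2 Tp T1 T2 b a1 a2 :: real
  assumes nz: "N \<noteq> 0" "T1 \<noteq> 0" "b \<noteq> 0" "a1 \<noteq> 0" "a2 \<noteq> 0" "D1 \<noteq> 0"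
  and F: "- Tp * N / b + T1 * D1 / a1 + T2 * D2 / a2 = 0"
  shows "let x = a2 / b in
   (- (2 * N * D2 * T2) + 2 * N * D2 * k1 * Tp * T2 / T1 - N * D2 * k2 * Tp)
   + 2 * (D1 ^ 2 * (1 - k1) * T1 - D2 ^ 2 * (1 - k2) * T2 + 2 * N ^ 2 * Tp - N ^ 2 * k1 * Tp ^ 2 / T1) * x
   + 3 * (N * D2 * (1 - k2) * Tp) * x^2
   = -4 * (2 * Tp * N * a2 / b - T2 * D2) * b * (k1 * D1 / (4 * a1) + k2 * D2 / (4 * a2)
      - (D1 * (1 - k1) * a1 + D2 * (1 - k2) * a2) / (4 * b\<^sup>2)
      - N / (2 * b))
     + 4 * a2^2 * a1 * b * ((- k2 * D2 / (4 * a2^2) - D2 * (1 - k2) / (4 * b^2)) * (- T1 * D1 / a1^2)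
         - (- k1 * D1 / (4 * a1^2) - D1 * (1 - k1) / (4 * b^2)) * (- T2 * D2 / a2^2))"
proof -
  have hTp: "Tp = (T1 * D1 / a1 + T2 * D2 / a2) * b / N" using F nz by (simp add: field_simps)
  show ?thesis unfolding Let_def hTp using nz
    by (simp add: field_simps power2_eq_square power3_eq_cube)
qed

lemma I3:
  fixes N D1 D2 k1 k2 Tp T1 T2 b a1 a2 :: real
  assumes nz: "N \<noteq> 0" "T1 \<noteq> 0" "b \<noteq> 0" "a1 \<noteq> 0" "a2 \<noteq> 0" "D1 \<noteq> 0"
  and F: "- Tp * N / b + T1 * D1 / a1 + T2 * D2 / a2 = 0"
  shows "(Tp * N / b^2) * (k1 * D1 / (4 * a1) + k2 * D2 / (4 * a2)
      - (D1 * (1 - k1) * a1 + D2 * (1 - k2) * a2) / (4 * b\<^sup>2)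
      - N / (2 * b)) =
    a1 * ((((D1 * (1 - k1) * a1 + D2 * (1 - k2) * a2) / (2 * b^3) + N / (2 * b^2))) * (- T1 * D1 / a1^2)
       - (- k1 * D1 / (4 * a1^2) - D1 * (1 - k1) / (4 * b^2)) * (Tp * N / b^2))
  + a2 * ((((D1 * (1 - k1) * a1 + D2 * (1 - k2) * a2) / (2 * b^3) + N / (2 * b^2))) * (- T2 * D2 / a2^2)
       - (- k2 * D2 / (4 * a2^2) - D2 * (1 - k2) / (4 * b^2)) * (Tp * N / b^2))"
proof -
  have hTp: "Tp = (T1 * D1 / a1 + T2 * D2 / a2) * b / N" using F nz by (simp add: field_simps)
  show ?thesis unfolding Let_def hTp using nz
    by (simp add: field_simps power2_eq_square power3_eq_cube)
qed


lemma poly_dvd_sq_iff: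
  fixes p :: "real poly"
  shows "[:-r, 1:] ^ 2 dvd p \<longleftrightarrow> poly p r = 0 \<and> poly (pderiv p) r = 0"
proof (cases "poly p r = 0")
  case True
  then have "[:-r, 1:] dvd p" using dvd_iff_poly_eq_0[of "-r" p] by simp
  then obtain q where q: "p = [:-r, 1:] * q" by (auto elim: dvdE)
  have d: "pderiv p = q + [:-r, 1:] * pderiv q"
    unfolding q by (subst pderiv_mult) (simp add: pderiv_pCons)
  have "[:-r, 1:] ^ 2 dvd p \<longleftrightarrow> [:-r, 1:] dvd q"
    unfolding q power2_eq_square
    by (rule dvd_times_left_cancel_iff) simp
  also have "\<dots> \<longleftrightarrow> poly q r = 0" using dvd_iff_poly_eq_0[of "-r" q] by simp
  finally show ?thesis using True d by simp
next
  case False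
  have "\<not> [:-r, 1:] ^ 2 dvd p"
  proof
    assume "[:-r, 1:] ^ 2 dvd p"
    then have "[:-r, 1:] dvd p" by (rule dvd_trans[rotated]) (simp only: power2_eq_square dvd_triv_left)
    then show False using False dvd_iff_poly_eq_0[of "-r" p] by simp
  qed
  then show ?thesis using False by simp
qed

lemma poly4: "poly [:c0, c1, c2, c3:] (x::real) = c0 + c1 * x + c2 * x^2 + c3 * x^3"
  by (simp add: algebra_simps power2_eq_square power3_eq_cube)

lemma pderiv4: "poly (pderiv [:c0, c1, c2, c3:]) (x::real) = c1 + 2 * c2 * x + 3 * c3 * x^2"
  by (simp add: pderiv_pCons algebra_simps power2_eq_square)

lemma crit_lin:
  fixes fS fF :: "real \<times> real \<times> real \<Rightarrow> real"
  assumes S: "fS = (\<lambda>v. sb * fst v + s1 * fst (snd v) + s2 * snd (snd v))"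
    and F: "fF = (\<lambda>v. fb * fst v + f1 * fst (snd v) + f2 * snd (snd v))"
    and fb: "fb \<noteq> 0"
  shows "(\<forall>v. fF v = 0 \<longrightarrow> fS v = 0) \<longleftrightarrow> (sb * f1 - s1 * fb = 0 \<and> sb * f2 - s2 * fb = 0)"
proof
  assume H: "\<forall>v. fF v = 0 \<longrightarrow> fS v = 0"
  have "fF (f1, -fb, 0) = 0" "fF (f2, 0, -fb) = 0" by (simp_all add: F algebra_simps)
  then have "fS (f1, -fb, 0) = 0" "fS (f2, 0, -fb) = 0" using H by blast+
  then show "sb * f1 - s1 * fb = 0 \<and> sb * f2 - s2 * fb = 0"
    by (simp add: S algebra_simps)
next
  assume H: "sb * f1 - s1 * fb = 0 \<and> sb * f2 - s2 * fb = 0"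
  show "\<forall>v. fF v = 0 \<longrightarrow> fS v = 0"
  proof (intro allI impI)
    fix v assume "fF v = 0"
    have "fb * fS v = sb * fF v + (s1 * fb - sb * f1) * fst (snd v) + (s2 * fb - sb * f2) * snd (snd v)"
      by (simp add: S F algebra_simps)
    then have "fb * fS v = 0" using H \<open>fF v = 0\<close> by simp
    then show "fS v = 0" using fb by simp
  qed
qed

lemma solve2:
  fixes a1 a2 f1 f2 m1 m2 :: real
  assumes "a1 \<noteq> 0" "a1 * f1 + a2 * f2 \<noteq> 0" "a1 * m1 + a2 * m2 = 0" "f2 * m1 - f1 * m2 = 0"
  shows "m1 = 0 \<and> m2 = 0"
proof -
  have eq: "a1 * (f2 * m1 - f1 * m2) = -((a1 * f1 + a2 * f2) * m2) + f2 * (a1 * m1 + a2 * m2)"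
    by (simp add: algebra_simps)
  then have "0 = -((a1 * f1 + a2 * f2) * m2)"
    by (simp only: assms(3,4) mult_zero_right add_0_right)
  then have "m2 = 0" using assms(2) by simp
  then show ?thesis using assms(1,3) by simp
qed

theorem lemma5p9:
  fixes n d1 d2 :: nat and k1 k2 Tp T1 T2 b a1 a2 :: real
  assumes n_pos: "0 < n" and d1_pos: "0 < d1" and d2_pos: "0 < d2"
    and k1: "0 < k1" "k1 < 1" and k2: "0 \<le> k2" "k2 < 1"
    and centre: "k2 = 0 \<longrightarrow> d2 = 1"
    and dimrel: "real n = 2 * (real d1 * (1 - k1) + real d2 * (1 - k2))"
    and T_pos: "0 < Tp" "0 < T1" "0 < T2"
    and g_in: "(b, a1, a2) \<in> MT0 n d1 d2 Tp T1 T2"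
  shows "crit_S_MT0 n d1 d2 k1 k2 Tp T1 T2 (b, a1, a2) \<longleftrightarrow>
     [:- (a2 / b), 1:] ^ 2 dvd
       [: (- (real d2 ^ 2 * k1 * T2 ^ 2 / T1) + k2 * real d2 ^ 2 * T2),
          (- (2 * real n * real d2 * T2) + 2 * real n * real d2 * k1 * Tp * T2 / T1
            - real n * real d2 * k2 * Tp),
          (real d1 ^ 2 * (1 - k1) * T1 - real d2 ^ 2 * (1 - k2) * T2 + 2 * real n ^ 2 * Tp
            - real n ^ 2 * k1 * Tp ^ 2 / T1),
          (real n * real d2 * (1 - k2) * Tp) :]"
  proof -
  have pos: "0 < b" "0 < a1" "0 < a2" and Fz: "- Tp * real n / b + T1 * real d1 / a1 + T2 * real d2 / a2 = 0"
    using g_in by (auto simp: MT0_def MK_def trT_def)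
  have nz: "real n \<noteq> 0" "T1 \<noteq> 0" "b \<noteq> 0" "a1 \<noteq> 0" "a2 \<noteq> 0" "real d1 \<noteq> 0"
    using pos n_pos d1_pos T_pos by auto
  define Sb where "Sb = (real d1 * (1 - k1) * a1 + real d2 * (1 - k2) * a2) / (2 * b^3) + real n / (2 * b^2)"
  define Sa1 where "Sa1 = - k1 * real d1 / (4 * a1^2) - real d1 * (1 - k1) / (4 * b^2)"
  define Sa2 where "Sa2 = - k2 * real d2 / (4 * a2^2) - real d2 * (1 - k2) / (4 * b^2)"
  define Fb where "Fb = Tp * real n / b^2"
  define Fa1 where "Fa1 = - T1 * real d1 / a1^2"
  define Fa2 where "Fa2 = - T2 * real d2 / a2^2"
  define SS where "SS = k1 * real d1 / (4 * a1) + k2 * real d2 / (4 * a2)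
      - (real d1 * (1 - k1) * a1 + real d2 * (1 - k2) * a2) / (4 * b\<^sup>2)
      - real n / (2 * b)"
  define M1 where "M1 = Sb * Fa1 - Sa1 * Fb"
  define M2 where "M2 = Sb * Fa2 - Sa2 * Fb"
  define M3 where "M3 = Sa2 * Fa1 - Sa1 * Fa2"
  have dS: "frechet_derivative (scal n d1 d2 k1 k2) (at (b, a1, a2))
      = (\<lambda>v. Sb * fst v + Sa1 * fst (snd v) + Sa2 * snd (snd v))"
    using frechet_derivative_at[OF scal_deriv[OF nz(3,4,5), of n d1 d2 k1 k2]]
    by (simp add: Sb_def Sa1_def Sa2_def)
  have dF: "frechet_derivative (trT n d1 d2 Tp T1 T2) (at (b, a1, a2))
      = (\<lambda>v. Fb * fst v + Fa1 * fst (snd v) + Fa2 * snd (snd v))"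
    using frechet_derivative_at[OF trT_deriv[OF nz(3,4,5), of n d1 d2 Tp T1 T2]]
    by (simp add: Fb_def Fa1_def Fa2_def)
  have Fbnz: "Fb \<noteq> 0" using nz T_pos by (simp add: Fb_def)
  have crit: "crit_S_MT0 n d1 d2 k1 k2 Tp T1 T2 (b, a1, a2) \<longleftrightarrow> M1 = 0 \<and> M2 = 0"
    unfolding crit_S_MT0_def MT0_tangent_def M1_def M2_def
    using crit_lin[OF dS dF Fbnz] g_in by auto
  have E1: "poly [: (- (real d2 ^ 2 * k1 * T2 ^ 2 / T1) + k2 * real d2 ^ 2 * T2),
          (- (2 * real n * real d2 * T2) + 2 * real n * real d2 * k1 * Tp * T2 / T1
            - real n * real d2 * k2 * Tp),
          (real d1 ^ 2 * (1 - k1) * T1 - real d2 ^ 2 * (1 - k2) * T2 + 2 * real n ^ 2 * Tp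
            - real n ^ 2 * k1 * Tp ^ 2 / T1),
          (real n * real d2 * (1 - k2) * Tp) :] (a2 / b) = -4 * T1 * real d1 * a2^2 / a1 * SS"
    unfolding poly4 SS_def using I1[OF nz Fz, of k1 k2] by (simp add: Let_def)
  have E2: "poly (pderiv [: (- (real d2 ^ 2 * k1 * T2 ^ 2 / T1) + k2 * real d2 ^ 2 * T2),
          (- (2 * real n * real d2 * T2) + 2 * real n * real d2 * k1 * Tp * T2 / T1
            - real n * real d2 * k2 * Tp),
          (real d1 ^ 2 * (1 - k1) * T1 - real d2 ^ 2 * (1 - k2) * T2 + 2 * real n ^ 2 * Tp
            - real n ^ 2 * k1 * Tp ^ 2 / T1),
          (real n * real d2 * (1 - k2) * Tp) :]) (a2 / b)
       = -4 * (2 * Tp * real n * a2 / b - T2 * real d2) * b * SS + 4 * a2^2 * a1 * b * M3"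
    unfolding pderiv4 SS_def M3_def Sa1_def Sa2_def Fa1_def Fa2_def
    using I2[OF nz Fz, of k1 k2] by (simp add: Let_def)
  have E3: "Fb * SS = a1 * M1 + a2 * M2"
    unfolding SS_def M1_def M2_def Sb_def Sa1_def Sa2_def Fb_def Fa1_def Fa2_def
    using I3[OF nz Fz, of k1 k2] by simp
  have E4: "Fb * M3 = Fa2 * M1 - Fa1 * M2"
    unfolding M1_def M2_def M3_def by (simp add: algebra_simps)
  have c1: "-4 * T1 * real d1 * a2^2 / a1 \<noteq> 0" using nz by simp
  have c2: "4 * a2^2 * a1 * b \<noteq> 0" using nz by simp
  have c3: "a1 * Fa1 + a2 * Fa2 \<noteq> 0"
  proof -
    have "a1 * Fa1 + a2 * Fa2 = - (T1 * real d1 / a1 + T2 * real d2 / a2)"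
      using nz by (simp add: Fa1_def Fa2_def power2_eq_square field_simps)
    moreover have "0 < T1 * real d1 / a1 + T2 * real d2 / a2"
      using pos T_pos d1_pos d2_pos by (intro add_pos_pos divide_pos_pos mult_pos_pos) auto
    ultimately show ?thesis by linarith
  qed
  show ?thesis
    unfolding crit poly_dvd_sq_iff E1 E2
  proof
    assume H: "M1 = 0 \<and> M2 = 0"
    then have "SS = 0" "M3 = 0" using E3 E4 Fbnz by auto
    then show "-4 * T1 * real d1 * a2^2 / a1 * SS = 0 \<and>
      -4 * (2 * Tp * real n * a2 / b - T2 * real d2) * b * SS + 4 * a2^2 * a1 * b * M3 = 0" by simp
  next
    assume H: "-4 * T1 * real d1 * a2^2 / a1 * SS = 0 \<and>
      -4 * (2 * Tp * real n * a2 / b - T2 * real d2) * b * SS + 4 * a2^2 * a1 * b * M3 = 0"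
    then have "SS = 0" using c1 by simp
    then have "M3 = 0" using H c2 by simp
    show "M1 = 0 \<and> M2 = 0"
      using solve2[OF nz(4) c3, of M1 M2] E3 E4 \<open>SS = 0\<close> \<open>M3 = 0\<close> by simp
  qed
qed

end
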